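(* If $n\ge4$ and $h$ is even with $h\ge\frac{2(n-1)}{n-3}$, then there exists $p\in\mathcal P$ such that $D_{\mu(p)}(p)=D_{\mu(p^r)}(p^r)=\{n\}$.
   Context: Let $n,h\ge2$ be integers, $N=\{1,\dots,n\}$, $H=\{1,\dots,h\}$. $\mathcal P$ is the set of $h$-tuples $p=(p_1,\dots,p_h)$ of linear orders on $N$; $p^r$ is obtained by reversing each $p_i$; $x>_{p_i}y$ means $x\ne y$ and $p_i$ ranks $x$ above $y$. For an integer $\mu$ with $h/2<\mu\le h$, $D_\mu(p)=\{x\in N: \forall y\in N,\ |\{i: y>_{p_i}x\}|<\mu\}$, and $\mu(p)=\min\{\mu\in\mathbb N\cap(h/2,h]: D_\mu(p)\neq\varnothing\}$. *)

theory Defs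
  imports Complex_Main
begin

text \<open>A linear order on N = {1..n} is a relation r with (x,y) in r meaning
 "x is ranked at or below y", i.e. y is ranked weakly above x. A profile is a function
 from voter indices to such relations; only indices in H = {1..h} matter.\<close>

definition is_profile :: "nat \<Rightarrow> nat \<Rightarrow> (nat \<Rightarrow> nat rel) \<Rightarrow> bool" where
  "is_profile n h p \<longleftrightarrow> (\<forall>i\<in>{1..h}. linear_order_on {1..n} (p i))"

definition pref :: "nat rel \<Rightarrow> nat \<Rightarrow> nat \<Rightarrow> bool" where
  "pref r x y \<longleftrightarrow> x \<noteq> y \<and> (y, x) \<in> r"

definition rev_profile :: "(nat \<Rightarrow> nat rel) \<Rightarrow> (nat \<Rightarrow> nat rel)" where
  "rev_profile p = (\<lambda>i. (p i)\<inverse>)"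

definition D :: "nat \<Rightarrow> nat \<Rightarrow> nat \<Rightarrow> (nat \<Rightarrow> nat rel) \<Rightarrow> nat set" where
  "D n h \<mu> p = {x \<in> {1..n}. \<forall>y\<in>{1..n}. card {i \<in> {1..h}. pref (p i) y x} < \<mu>}"

definition mu :: "nat \<Rightarrow> nat \<Rightarrow> (nat \<Rightarrow> nat rel) \<Rightarrow> nat" where
  "mu n h p = (LEAST m. h < 2 * m \<and> m \<le> h \<and> D n h m p \<noteq> {})"

end

theory Submission
  imports Defs
begin

lemma lin_rank:
  assumes "inj_on f A"
  shows "linear_order_on A {(x,y). x \<in> A \<and> y \<in> A \<and> (f x :: nat) \<le> f y}"
  using assms unfolding linear_order_on_def partial_order_on_def preorder_on_def
    refl_on_def trans_def antisym_def total_on_def inj_on_def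
  by auto

definition rk :: "nat \<Rightarrow> nat \<Rightarrow> nat \<Rightarrow> nat \<Rightarrow> nat" where
  "rk n k i x = (if x = n then (if i \<le> k then n else 0) else (x + i) mod (n-1) + 1)"

definition PP :: "nat \<Rightarrow> nat \<Rightarrow> nat \<Rightarrow> nat rel" where
  "PP n k i = {(x,y). x \<in> {1..n} \<and> y \<in> {1..n} \<and> rk n k i x \<le> rk n k i y}"

lemma mod_eq_small:
  assumes "(x::nat) \<in> {1..m}" "y \<in> {1..m}" "x mod m = y mod m"
  shows "x = y"
proof (cases "x < m")
  case True
  then have xm: "x mod m = x" by simp
  show ?thesis
  proof (cases "y < m")
    case True then show ?thesis using xm assms by simp
  next
    case False then have "y = m" using assms by simp
    then show ?thesis using xm assms by simp
  qed
next
  case False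
  then have xm: "x = m" using assms by simp
  show ?thesis
  proof (cases "y < m")
    case True then show ?thesis using xm assms by simp
  next
    case False then show ?thesis using xm assms by simp
  qed
qed

lemma rk_inj:
  assumes "n \<ge> 4"
  shows "inj_on (rk n k i) {1..n}"
proof (rule inj_onI)
  fix x y assume xy: "x \<in> {1..n}" "y \<in> {1..n}" "rk n k i x = rk n k i y"
  have lt: "Suc ((z + i) mod (n - Suc 0)) < n" for z
  proof -
    have "(z + i) mod (n - Suc 0) < n - Suc 0" using assms by simp
    then show ?thesis using assms by linarith
  qed
  show "x = y"
  proof (cases "x = n \<or> y = n")
    case True
    then show ?thesis using xy lt[of x] lt[of y] assms
      by (auto simp: rk_def split: if_splits)
  next
    case False
    then have "(x + i) mod (n-1) = (y + i) mod (n-1)" using xy by (auto simp: rk_def)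
    then have "x mod (n-1) = y mod (n-1)" by (simp add: nat_mod_eq_iff) 
    then show ?thesis using mod_eq_small[of x "n-1" y] False xy by auto
  qed
qed

lemma pref_PP:
  assumes "n \<ge> 4" "x \<in> {1..n}" "y \<in> {1..n}"
  shows "pref (PP n k i) y x \<longleftrightarrow> rk n k i x < rk n k i y"
proof -
  have i: "x \<noteq> y \<Longrightarrow> rk n k i x \<noteq> rk n k i y"
    using rk_inj[OF assms(1), of k i] assms(2,3) unfolding inj_on_def by blast
  have "pref (PP n k i) y x \<longleftrightarrow> x \<noteq> y \<and> rk n k i x \<le> rk n k i y"
    using assms(2,3) unfolding pref_def PP_def by auto
  also have "\<dots> \<longleftrightarrow> rk n k i x < rk n k i y" using i by (cases "x = y") auto
  finally show ?thesis .
qed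

lemma Dmu:
  assumes "h = 2*k" "k \<ge> 1" "n \<ge> 1"
    and A: "\<forall>y\<in>{1..n}. card {i\<in>{1..h}. pref (q i) y n} \<le> k"
    and B: "\<forall>x\<in>{1..n}. x \<noteq> n \<longrightarrow> (\<exists>y\<in>{1..n}. card {i\<in>{1..h}. pref (q i) y x} \<ge> k+1)"
  shows "D n h (mu n h q) q = {n}"
proof -
  have D1: "D n h (k+1) q = {n}"
  proof
    show "{n} \<subseteq> D n h (k+1) q" using A assms(3) unfolding D_def by force
    show "D n h (k+1) q \<subseteq> {n}"
    proof
      fix x assume "x \<in> D n h (k+1) q"
      then have x: "x \<in> {1..n}" "\<forall>y\<in>{1..n}. card {i \<in> {1..h}. pref (q i) y x} < k+1"
        unfolding D_def by auto
      show "x \<in> {n}"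
      proof (rule ccontr)
        assume "x \<notin> {n}"
        then obtain y where "y \<in> {1..n}" "card {i\<in>{1..h}. pref (q i) y x} \<ge> k+1"
          using B x(1) by auto
        then show False using x(2) by fastforce
      qed
    qed
  qed
  have "mu n h q = k+1"
    unfolding mu_def
  proof (rule Least_equality)
    show "h < 2 * (k + 1) \<and> k + 1 \<le> h \<and> D n h (k + 1) q \<noteq> {}"
      using D1 assms by auto
    show "\<And>y. h < 2 * y \<and> y \<le> h \<and> D n h y q \<noteq> {} \<Longrightarrow> k + 1 \<le> y"
      using assms by auto
  qed
  then show ?thesis using D1 by simp
qed

lemma cntA:
  assumes "n \<ge> 4" "h = 2*k" "y \<in> {1..n}"
  shows "card {i\<in>{1..h}. pref (PP n k i) y n} \<le> k"
proof -
  have "{i\<in>{1..h}. pref (PP n k i) y n} \<subseteq> {k+1..h}"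
  proof
    fix i assume i: "i \<in> {i\<in>{1..h}. pref (PP n k i) y n}"
    then have "rk n k i n < rk n k i y" using pref_PP[OF assms(1) _ assms(3), of n k i] assms by auto
    moreover have "y \<noteq> n" using i unfolding pref_def by auto
    moreover have "(y + i) mod (n-1) < n - 1" using assms by simp
    ultimately have "\<not> i \<le> k" unfolding rk_def by (auto split: if_splits)
    then show "i \<in> {k+1..h}" using i by auto
  qed
  then have "card {i\<in>{1..h}. pref (PP n k i) y n} \<le> card {k+1..h}" by (intro card_mono) auto
  then show ?thesis using assms by simp
qed

lemma cntA':
  assumes "n \<ge> 4" "h = 2*k" "y \<in> {1..n}"
  shows "card {i\<in>{1..h}. pref (PP n k i) n y} \<le> k"
proof -
  have "{i\<in>{1..h}. pref (PP n k i) n y} \<subseteq> {1..k}"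
  proof
    fix i assume i: "i \<in> {i\<in>{1..h}. pref (PP n k i) n y}"
    then have "rk n k i y < rk n k i n" using pref_PP[OF assms(1) assms(3), of n k i] assms by auto
    moreover have "y \<noteq> n" using i unfolding pref_def by auto
    ultimately have "i \<le> k" unfolding rk_def by (auto split: if_splits)
    then show "i \<in> {1..k}" using i by auto
  qed
  then have "card {i\<in>{1..h}. pref (PP n k i) n y} \<le> card {1..k}" by (intro card_mono) auto
  then show ?thesis using assms by simp
qed

lemma addc: "((a::nat) + c) mod m = (b + c) mod m \<Longrightarrow> a mod m = b mod m"
  by (auto simp: nat_mod_eq_iff)

lemma cardB:
  assumes m: "m > 0" "h \<le> m*(k-1)" "h \<ge> 1"
  shows "card {i\<in>{1..h}. Suc (x + i) mod m = 0} \<le> k - 1"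
proof -
  let ?B = "{i\<in>{1..h}. Suc (x + i) mod m = 0}"
  have inj: "inj_on (\<lambda>i. (i - 1) div m) ?B"
  proof (rule inj_onI)
    fix i j assume i: "i \<in> ?B" and j: "j \<in> ?B" and eq: "(i - 1) div m = (j - 1) div m"
    have "Suc (x + i) mod m = Suc (x + j) mod m" "i \<ge> 1" "j \<ge> 1" using i j by auto
    then have "(i - 1) mod m = (j - 1) mod m"
      using addc[of "i - 1" "x+2" m "j - 1"] by (simp add: add.commute)
    then have "i - 1 = j - 1" using eq by (metis div_mod_decomp)
    then show "i = j" using i j by auto
  qed
  have sub: "(\<lambda>i. (i - 1) div m) ` ?B \<subseteq> {0..(h-1) div m}"
  proof
    fix z assume "z \<in> (\<lambda>i. (i - 1) div m) ` ?B"
    then obtain i where "i \<le> h" "z = (i - 1) div m" by auto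
    then show "z \<in> {0..(h-1) div m}" using div_le_mono[of "i - 1" "h - 1" m] by simp
  qed
  have "card ?B = card ((\<lambda>i. (i - 1) div m) ` ?B)" using card_image[OF inj] by simp
  also have "\<dots> \<le> card {0..(h-1) div m}" by (rule card_mono[OF _ sub]) simp
  finally have "card ?B \<le> card {0..(h-1) div m}" .
  then have c: "card ?B \<le> (h-1) div m + 1" by simp
  have a: "m * ((h-1) div m) \<le> h - 1" by simp
  have b: "h - 1 < m * (k-1)" using m by linarith
  have "m * ((h-1) div m) < m * (k-1)" using a b by (rule le_less_trans)
  then have "(h-1) div m < k - 1" by (rule mult_less_cancel1[THEN iffD1, THEN conjunct2])
  then show ?thesis using c by linarith
qed

lemma cntB:
  assumes n: "n \<ge> 4" and hk: "h = 2*k" "h \<le> (n-1)*(k-1)" "h \<ge> 1"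
    and x: "x \<in> {1..n-1}" and s: "s \<in> {1..n-1}" and sx: "s mod (n-1) = Suc x mod (n-1)"
  shows "k+1 \<le> card {i\<in>{1..h}. pref (PP n k i) s x}"
proof -
  let ?m = "n - 1"
  let ?G = "{i\<in>{1..h}. pref (PP n k i) s x}"
  let ?B = "{i\<in>{1..h}. Suc (x + i) mod ?m = 0}"
  have m0: "?m > 0" using n by simp
  have cB: "card ?B \<le> k - 1" using cardB[OF m0 hk(2) hk(3)] .
  have sub: "{1..h} \<subseteq> ?G \<union> ?B"
  proof
    fix i assume i: "i \<in> {1..h}"
    show "i \<in> ?G \<union> ?B"
    proof (cases "Suc (x + i) mod ?m = 0")
      case True then show ?thesis using i by auto
    next
      case False
      have "(s + i) mod ?m = (Suc x + i) mod ?m" using sx by (metis mod_add_left_eq)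
      then have "(s + i) mod ?m = Suc (x + i) mod ?m" by simp
      also have "\<dots> = Suc ((x + i) mod ?m)" using False by (metis mod_Suc)
      finally have "rk n k i x < rk n k i s" using x s n unfolding rk_def by auto
      then have "pref (PP n k i) s x" using pref_PP[OF n, of x s k i] x s by auto
      then show ?thesis using i by auto
    qed
  qed
  have "h = card {1..h}" by simp
  also have "\<dots> \<le> card (?G \<union> ?B)" by (rule card_mono[OF _ sub]) simp
  also have "\<dots> \<le> card ?G + card ?B" by (rule card_Un_le)
  finally show ?thesis using cB hk by linarith
qed

lemma pref_rev: "pref (rev_profile p i) y x = pref (p i) x y"
  unfolding pref_def rev_profile_def by auto

theorem proposition9:
  fixes n h :: nat
  assumes "n \<ge> 4" and "even h" and "h \<ge> 2"
    and "real h \<ge> 2 * (real n - 1) / (real n - 3)"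
  shows "\<exists>p. is_profile n h p \<and>
           D n h (mu n h p) p = {n} \<and>
           D n h (mu n h (rev_profile p)) (rev_profile p) = {n}"
proof -
  define k where "k = h div 2"
  have hk: "h = 2*k" using assms(2) unfolding k_def by simp
  have k1: "k \<ge> 1" using hk assms(3) by simp
  have "real h * (real n - 3) \<ge> 2 * (real n - 1)"
    using assms(4) assms(1) by (simp add: pos_divide_le_eq)
  then have "real k * (real n - 3) \<ge> real n - 1" using hk by simp
  then have r: "real h \<le> (real n - 1) * (real k - 1)" using hk by (simp add: algebra_simps)
  have "real ((n-1)*(k-1)) = (real n - 1) * (real k - 1)" using assms(1) k1 by (simp add: of_nat_diff)
  then have "real h \<le> real ((n-1)*(k-1))" using r by simp
  then have hle: "h \<le> (n-1)*(k-1)" by (simp only: of_nat_le_iff)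
  let ?p = "PP n k"
  have prof: "is_profile n h ?p"
    unfolding is_profile_def PP_def using lin_rank[OF rk_inj[OF assms(1)]] by blast
  have A: "\<forall>y\<in>{1..n}. card {i\<in>{1..h}. pref (?p i) y n} \<le> k"
    using cntA[OF assms(1) hk] by blast
  have A': "\<forall>y\<in>{1..n}. card {i\<in>{1..h}. pref (rev_profile ?p i) y n} \<le> k"
    using cntA'[OF assms(1) hk] by (simp add: pref_rev)
  have B: "\<forall>x\<in>{1..n}. x \<noteq> n \<longrightarrow> (\<exists>y\<in>{1..n}. card {i\<in>{1..h}. pref (?p i) y x} \<ge> k+1)"
  proof (intro ballI impI)
    fix x assume x: "x \<in> {1..n}" "x \<noteq> n"
    define s where "s = (if x = n - 1 then 1 else x + 1)"
    have xs: "x \<in> {1..n-1}" "s \<in> {1..n-1}" using x assms(1) unfolding s_def by auto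
    have "s mod (n-1) = Suc x mod (n-1)" unfolding s_def using assms(1) by (auto simp: mod_Suc)
    then have "k+1 \<le> card {i\<in>{1..h}. pref (?p i) s x}"
      using cntB[OF assms(1) hk hle _ xs] assms(3) by simp
    then show "\<exists>y\<in>{1..n}. card {i\<in>{1..h}. pref (?p i) y x} \<ge> k+1" using xs by force
  qed
  have B': "\<forall>x\<in>{1..n}. x \<noteq> n \<longrightarrow> (\<exists>y\<in>{1..n}. card {i\<in>{1..h}. pref (rev_profile ?p i) y x} \<ge> k+1)"
  proof (intro ballI impI)
    fix x assume x: "x \<in> {1..n}" "x \<noteq> n"
    define z where "z = (if x = 1 then n - 1 else x - 1)"
    have xs: "z \<in> {1..n-1}" "x \<in> {1..n-1}" using x assms(1) unfolding z_def by auto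
    have "x mod (n-1) = Suc z mod (n-1)" unfolding z_def using x assms(1) by (auto simp: mod_Suc)
    then have "k+1 \<le> card {i\<in>{1..h}. pref (?p i) x z}"
      using cntB[OF assms(1) hk hle _ xs] assms(3) by simp
    then show "\<exists>y\<in>{1..n}. card {i\<in>{1..h}. pref (rev_profile ?p i) y x} \<ge> k+1"
      using xs by (force simp: pref_rev)
  qed
  have n1: "n \<ge> 1" using assms(1) by simp
  show ?thesis
    using prof Dmu[OF hk k1 n1 A B] Dmu[OF hk k1 n1 A' B'] by blast
qed

end
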